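(* Let $\mathcal H$ be a complex Hilbert space, $T\in\mathcal B(\mathcal H)$ left-invertible, and $L\in\mathcal B(\mathcal H)$ with $LT=I$. Then the spectral radius $r(L)$ is positive, and: if $0\in\sigma(T)$ then $\mathbb D_{1/r(L)}\subseteq\sigma_r(T)\setminus\sigma_l(T)$; if $0\notin\sigma(T)$ then $\sigma(T)\subseteq\mathbb C\setminus\mathbb D_{1/r(L)}$. In particular $r(T)r(L)\ge1$.
   Context: $\mathbb D_\rho=\{z\in\mathbb C:|z|<\rho\}$. $\sigma_l(A)$ (resp. $\sigma_r(A)$) is the set of $\lambda$ with $A-\lambda I$ not left-invertible (resp. not right-invertible); $r(\cdot)$ is the spectral radius. *)

theory Defs
  imports "HOL-Analysis.Analysis"
begin

class complex_vector = real_vector +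
  fixes scaleC :: "complex \<Rightarrow> 'a \<Rightarrow> 'a" (infixr \<open>*\<^sub>C\<close> 75)
  assumes scaleC_add_right: "a *\<^sub>C (x + y) = a *\<^sub>C x + a *\<^sub>C y"
    and scaleC_add_left: "(a + b) *\<^sub>C x = a *\<^sub>C x + b *\<^sub>C x"
    and scaleC_scaleC: "a *\<^sub>C (b *\<^sub>C x) = (a * b) *\<^sub>C x"
    and scaleC_one: "1 *\<^sub>C x = x"
    and scaleR_scaleC: "scaleR r x = complex_of_real r *\<^sub>C x"

class complex_inner = complex_vector + real_normed_vector +
  fixes cinner :: "'a \<Rightarrow> 'a \<Rightarrow> complex"
  assumes cinner_commute: "cinner x y = cnj (cinner y x)"
    and cinner_add_right: "cinner x (y + z) = cinner x y + cinner x z"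
    and cinner_scaleC_right: "cinner x (a *\<^sub>C y) = a * cinner x y"
    and cinner_ge_zero: "0 \<le> Re (cinner x x)"
    and cinner_eq_zero_iff: "cinner x x = 0 \<longleftrightarrow> x = 0"
    and norm_eq_sqrt_cinner: "norm x = sqrt (Re (cinner x x))"

class chilbert_space = complex_inner + complete_space

definition bounded_op :: "('a::complex_inner \<Rightarrow> 'a) \<Rightarrow> bool" where
  "bounded_op T \<longleftrightarrow> (\<forall>x y. T (x + y) = T x + T y) \<and> (\<forall>c x. T (c *\<^sub>C x) = c *\<^sub>C T x)
     \<and> (\<exists>K. \<forall>x. norm (T x) \<le> norm x * K)"

definition left_invertible_op :: "('a::complex_inner \<Rightarrow> 'a) \<Rightarrow> bool" where
  "left_invertible_op T \<longleftrightarrow> (\<exists>S. bounded_op S \<and> S \<circ> T = id)"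

definition right_invertible_op :: "('a::complex_inner \<Rightarrow> 'a) \<Rightarrow> bool" where
  "right_invertible_op T \<longleftrightarrow> (\<exists>S. bounded_op S \<and> T \<circ> S = id)"

definition invertible_op :: "('a::complex_inner \<Rightarrow> 'a) \<Rightarrow> bool" where
  "invertible_op T \<longleftrightarrow> (\<exists>S. bounded_op S \<and> S \<circ> T = id \<and> T \<circ> S = id)"

definition shift_op :: "('a::complex_inner \<Rightarrow> 'a) \<Rightarrow> complex \<Rightarrow> 'a \<Rightarrow> 'a" where
  "shift_op T c = (\<lambda>x. T x - c *\<^sub>C x)"

definition op_spectrum :: "('a::complex_inner \<Rightarrow> 'a) \<Rightarrow> complex set" where
  "op_spectrum T = {c. \<not> invertible_op (shift_op T c)}"

definition left_spectrum :: "('a::complex_inner \<Rightarrow> 'a) \<Rightarrow> complex set" where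
  "left_spectrum T = {c. \<not> left_invertible_op (shift_op T c)}"

definition right_spectrum :: "('a::complex_inner \<Rightarrow> 'a) \<Rightarrow> complex set" where
  "right_spectrum T = {c. \<not> right_invertible_op (shift_op T c)}"

definition spectral_radius_op :: "('a::complex_inner \<Rightarrow> 'a) \<Rightarrow> real" where
  "spectral_radius_op T = Sup (norm ` op_spectrum T)"

end

theory Submission
  imports Defs "HOL-Complex_Analysis.Complex_Analysis"
begin

lemma scaleC_zero_left[simp]: "(0::complex) *\<^sub>C (x::'a::complex_vector) = 0"
  by (metis add_cancel_right_right scaleC_add_left)

lemma scaleC_zero_right[simp]: "(a::complex) *\<^sub>C (0::'a::complex_vector) = 0"
  by (metis add_cancel_right_right add_0 scaleC_add_right)

lemma scaleC_minus_left: "(-a) *\<^sub>C (x::'a::complex_vector) = - (a *\<^sub>C x)"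
  by (metis add.right_inverse add_eq_0_iff scaleC_add_left scaleC_zero_left)

lemma scaleC_minus_right: "a *\<^sub>C (- x::'a::complex_vector) = - (a *\<^sub>C x)"
  by (metis add.right_inverse add_eq_0_iff scaleC_add_right scaleC_zero_right)

lemma scaleC_diff_left: "(a - b) *\<^sub>C (x::'a::complex_vector) = a *\<^sub>C x - b *\<^sub>C x"
  by (simp only: diff_conv_add_uminus scaleC_add_left scaleC_minus_left)

lemma scaleC_diff_right: "a *\<^sub>C (x - y::'a::complex_vector) = a *\<^sub>C x - a *\<^sub>C y"
  by (simp only: diff_conv_add_uminus scaleC_add_right scaleC_minus_right)

lemma scaleC_comm: "a *\<^sub>C b *\<^sub>C (x::'a::complex_vector) = b *\<^sub>C a *\<^sub>C x"
  by (simp add: scaleC_scaleC mult.commute)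

lemma cinner_zero_right[simp]: "cinner (x::'a::complex_inner) 0 = 0"
proof -
  have "cinner x 0 = cinner x 0 + cinner x 0" using cinner_add_right[of x 0 0] by simp
  then show ?thesis by simp
qed

lemma cinner_zero_left[simp]: "cinner 0 (x::'a::complex_inner) = 0"
  by (simp add: cinner_commute[of 0 x])

lemma cinner_add_left: "cinner (x + y) (z::'a::complex_inner) = cinner x z + cinner y z"
proof -
  have "cinner (x + y) z = cnj (cinner z (x + y))" by (rule cinner_commute)
  also have "\<dots> = cnj (cinner z x) + cnj (cinner z y)" by (simp only: cinner_add_right complex_cnj_add)
  also have "\<dots> = cinner x z + cinner y z" by (simp only: cinner_commute[of x z, symmetric] cinner_commute[of y z, symmetric])
  finally show ?thesis .
qed

lemma cinner_scaleC_left: "cinner (a *\<^sub>C x) (y::'a::complex_inner) = cnj a * cinner x y"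
proof -
  have "cinner (a *\<^sub>C x) y = cnj (cinner y (a *\<^sub>C x))" by (rule cinner_commute)
  also have "\<dots> = cnj a * cnj (cinner y x)" by (simp only: cinner_scaleC_right complex_cnj_mult)
  also have "\<dots> = cnj a * cinner x y" by (simp only: cinner_commute[of x y, symmetric])
  finally show ?thesis .
qed

lemma cinner_minus_right: "cinner x (- y::'a::complex_inner) = - cinner x y"
proof -
  have "cinner x (- y) + cinner x y = 0" by (simp flip: cinner_add_right)
  then show ?thesis by (simp add: eq_neg_iff_add_eq_0)
qed

lemma cinner_minus_left: "cinner (- x) (y::'a::complex_inner) = - cinner x y"
proof -
  have "cinner (- x) y + cinner x y = 0" by (simp flip: cinner_add_left)
  then show ?thesis by (simp add: eq_neg_iff_add_eq_0)
qed

lemma cinner_diff_right: "cinner x (y - z::'a::complex_inner) = cinner x y - cinner x z"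
  by (simp only: diff_conv_add_uminus cinner_add_right cinner_minus_right)

lemma cinner_diff_left: "cinner (x - y) (z::'a::complex_inner) = cinner x z - cinner y z"
  by (simp only: diff_conv_add_uminus cinner_add_left cinner_minus_left)

lemma cinner_self_real: "cinner x (x::'a::complex_inner) = complex_of_real (Re (cinner x x))"
proof -
  have h: "cnj (cinner x x) = cinner x x" by (rule cinner_commute[of x x, symmetric])
  have "Im (cnj (cinner x x)) = Im (cinner x x)" by (simp only: h)
  then have "Im (cinner x x) = 0" by simp
  then show ?thesis by (simp add: complex_eq_iff)
qed

lemma norm_sq_cinner: "(norm (x::'a::complex_inner))^2 = Re (cinner x x)"
  by (simp add: norm_eq_sqrt_cinner cinner_ge_zero)

lemma norm_scaleC: "norm (a *\<^sub>C (x::'a::complex_inner)) = cmod a * norm x"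
proof -
  have e1: "cnj a * a = complex_of_real ((cmod a)^2)"
    by (subst mult.commute) (rule complex_norm_square[symmetric])
  have "cinner (a *\<^sub>C x) (a *\<^sub>C x) = (cnj a * a) * cinner x x"
    by (simp add: cinner_scaleC_left cinner_scaleC_right mult.assoc)
  also have "\<dots> = complex_of_real ((cmod a)^2) * complex_of_real (Re (cinner x x))"
    by (subst cinner_self_real) (simp add: e1)
  finally have "Re (cinner (a *\<^sub>C x) (a *\<^sub>C x)) = (cmod a)^2 * Re (cinner x x)"
    by simp
  then have "(norm (a *\<^sub>C x))^2 = (cmod a * norm x)^2"
    by (simp add: norm_sq_cinner power_mult_distrib)
  then show ?thesis
    by (rule power2_eq_imp_eq) auto
qed

lemma cauchy_schwarz: "cmod (cinner x (y::'a::complex_inner)) \<le> norm x * norm y"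
proof (cases "x = 0")
  case True then show ?thesis by simp
next
  case False
  define a where "a = Re (cinner x x)"
  define b where "b = cinner x y"
  have ax: "cinner x x = complex_of_real a" unfolding a_def by (rule cinner_self_real)
  have apos: "a > 0" using False cinner_ge_zero[of x] cinner_eq_zero_iff[of x] ax
    by (metis a_def less_eq_real_def of_real_0)
  define t where "t = b / complex_of_real a"
  have yx: "cinner y x = cnj b" unfolding b_def by (metis cinner_commute)
  have "cinner (y - t *\<^sub>C x) (y - t *\<^sub>C x)
      = cinner y y - t * cinner y x - cnj t * cinner x y + cnj t * t * cinner x x"
    by (simp add: cinner_diff_left cinner_diff_right cinner_scaleC_left cinner_scaleC_right
        algebra_simps)
  also have "\<dots> = cinner y y - complex_of_real ((cmod b)^2 / a)"
    using apos unfolding t_def yx ax b_def[symmetric]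
    by (simp add: field_simps complex_norm_square[symmetric] mult.commute)
  finally have "0 \<le> Re (cinner y y) - (cmod b)^2 / a"
    using cinner_ge_zero[of "y - t *\<^sub>C x"] by simp
  then have "(cmod b)^2 \<le> a * Re (cinner y y)"
    using apos by (simp add: field_simps)
  also have "\<dots> = (norm x * norm y)^2"
    by (simp add: a_def norm_sq_cinner power_mult_distrib)
  finally show ?thesis unfolding b_def
    by (meson mult_nonneg_nonneg norm_ge_zero power2_le_imp_le)
qed


lemma scaleC_minus_one: "(-1) *\<^sub>C (x::'a::complex_vector) = - x"
  by (simp add: scaleC_minus_left scaleC_one)

lemma scaleC_cancel: "c \<noteq> 0 \<Longrightarrow> c *\<^sub>C ((1/c) *\<^sub>C (x::'a::complex_vector)) = x"
  by (simp add: scaleC_scaleC scaleC_one)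

lemma scaleC_cancel2: "c \<noteq> 0 \<Longrightarrow> (1/c) *\<^sub>C (c *\<^sub>C (x::'a::complex_vector)) = x"
  by (simp add: scaleC_scaleC scaleC_one)

context
  fixes T :: "'a::complex_inner \<Rightarrow> 'a"
  assumes bT: "bounded_op T"
begin

lemma bop_add: "T (x + y) = T x + T y"
  using bT unfolding bounded_op_def by blast

lemma bop_scaleC: "T (c *\<^sub>C x) = c *\<^sub>C T x"
  using bT unfolding bounded_op_def by blast

lemma bop_zero: "T 0 = 0"
  using bop_scaleC[of 0 0] by simp

lemma bop_minus: "T (- x) = - T x"
  using bop_scaleC[of "-1" x] by (simp only: scaleC_minus_one)

lemma bop_diff: "T (x - y) = T x - T y"
  by (simp only: diff_conv_add_uminus bop_add bop_minus)

lemma bop_bound: "\<exists>K>0. \<forall>x. norm (T x) \<le> K * norm x"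
proof -
  obtain K where K: "\<And>x. norm (T x) \<le> norm x * K" using bT unfolding bounded_op_def by blast
  have "norm (T x) \<le> (max K 1) * norm x" for x
  proof -
    have "norm x * K \<le> norm x * max K 1" by (simp add: mult_left_mono)
    then show ?thesis using K[of x] by (simp add: mult.commute)
  qed
  then show ?thesis by (intro exI[of _ "max K 1"]) auto
qed

end

lemma bop_comp: "bounded_op A \<Longrightarrow> bounded_op B \<Longrightarrow> bounded_op (A \<circ> B)"
proof -
  assume a: "bounded_op A" and b: "bounded_op B"
  obtain KA where KA: "KA > 0" "\<And>x. norm (A x) \<le> KA * norm x" using bop_bound[OF a] by blast
  obtain KB where KB: "KB > 0" "\<And>x. norm (B x) \<le> KB * norm x" using bop_bound[OF b] by blast
  have "norm (A (B x)) \<le> norm x * (KA * KB)" for x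
  proof -
    have "norm (A (B x)) \<le> KA * norm (B x)" by (rule KA(2))
    also have "\<dots> \<le> KA * (KB * norm x)" using KA(1) KB(2)[of x] by (simp add: mult_left_mono)
    finally show ?thesis by (simp add: algebra_simps)
  qed
  then show ?thesis unfolding bounded_op_def
    using bop_add[OF a] bop_add[OF b] bop_scaleC[OF a] bop_scaleC[OF b] by auto
qed

lemma bop_id: "bounded_op (id :: 'a::complex_inner \<Rightarrow> 'a)"
  unfolding bounded_op_def by (auto intro: exI[of _ 1])

lemma bop_scal: "bounded_op (\<lambda>x::'a::complex_inner. c *\<^sub>C x)"
  unfolding bounded_op_def
  by (auto simp: scaleC_add_right scaleC_comm norm_scaleC mult.commute intro!: exI[of _ "cmod c"])

lemma bop_minus_op:
  assumes a: "bounded_op A" and b: "bounded_op B"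
  shows "bounded_op (\<lambda>x::'a::complex_inner. A x - B x)"
proof -
  obtain KA where KA: "KA > 0" "\<And>x. norm (A x) \<le> KA * norm x" using bop_bound[OF a] by blast
  obtain KB where KB: "KB > 0" "\<And>x. norm (B x) \<le> KB * norm x" using bop_bound[OF b] by blast
  have "norm (A x - B x) \<le> norm x * (KA + KB)" for x
  proof -
    have "norm (A x - B x) \<le> norm (A x) + norm (B x)" by (rule norm_triangle_ineq4)
    also have "\<dots> \<le> KA * norm x + KB * norm x" using KA(2)[of x] KB(2)[of x] by simp
    finally show ?thesis by (simp add: algebra_simps)
  qed
  moreover have "A (x + y) - B (x + y) = (A x - B x) + (A y - B y)" for x y
    by (simp add: bop_add[OF a] bop_add[OF b])
  moreover have "A (c *\<^sub>C x) - B (c *\<^sub>C x) = c *\<^sub>C (A x - B x)" for c x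
    by (simp add: bop_scaleC[OF a] bop_scaleC[OF b] scaleC_diff_right)
  ultimately show ?thesis unfolding bounded_op_def by blast
qed

lemma bop_shift: "bounded_op T \<Longrightarrow> bounded_op (shift_op T c)"
  unfolding shift_op_def by (rule bop_minus_op) (auto intro: bop_scal)

lemma shift_op_0: "shift_op T 0 = T"
  unfolding shift_op_def by simp

lemma invertible_from_lower:
  fixes S :: "'a::complex_inner \<Rightarrow> 'a"
  assumes bS: "bounded_op S" and sS: "surj S" and m: "m > 0"
    and low: "\<And>z. m * norm z \<le> norm (S z)"
  shows "invertible_op S"
proof -
  have injS: "inj S"
  proof (rule injI)
    fix x y assume "S x = S y"
    then have "S (x - y) = 0" by (simp add: bop_diff[OF bS])
    then have "m * norm (x - y) \<le> 0" using low[of "x - y"] by simp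
    then show "x = y" using m by (simp add: mult_le_0_iff)
  qed
  define S' where "S' = inv S"
  have SS': "S (S' w) = w" for w unfolding S'_def using sS by (simp add: surj_f_inv_f)
  have S'S: "S' (S z) = z" for z unfolding S'_def using injS by simp
  have "S' (x + y) = S' x + S' y" for x y
    by (metis SS' S'S bop_add[OF bS])
  moreover have "S' (c *\<^sub>C x) = c *\<^sub>C S' x" for c x
    by (metis SS' S'S bop_scaleC[OF bS])
  moreover have "norm (S' w) \<le> norm w * (1/m)" for w
    using low[of "S' w"] m by (simp add: SS' field_simps mult.commute)
  ultimately have "bounded_op S'" unfolding bounded_op_def by blast
  moreover have "S' \<circ> S = id" "S \<circ> S' = id" by (auto simp: SS' S'S)
  ultimately show ?thesis unfolding invertible_op_def by blast
qed

lemma invertible_opE: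
  assumes "invertible_op (A::'a::complex_inner \<Rightarrow> 'a)"
  obtains S where "bounded_op S" "\<And>x. S (A x) = x" "\<And>x. A (S x) = x"
  using assms unfolding invertible_op_def by (metis comp_apply id_apply)

lemma invertible_opI:
  assumes "bounded_op (S::'a::complex_inner \<Rightarrow> 'a)" "\<And>x. S (A x) = x" "\<And>x. A (S x) = x"
  shows "invertible_op A"
  using assms unfolding invertible_op_def by (intro exI[of _ S]) auto

lemma inv_comp:
  assumes "invertible_op A" "invertible_op (B::'a::complex_inner \<Rightarrow> 'a)"
  shows "invertible_op (A \<circ> B)"
proof -
  obtain SA where a: "bounded_op SA" "\<And>x. SA (A x) = x" "\<And>x. A (SA x) = x"
    using invertible_opE[OF assms(1)] by blast
  obtain SB where b: "bounded_op SB" "\<And>x. SB (B x) = x" "\<And>x. B (SB x) = x"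
    using invertible_opE[OF assms(2)] by blast
  show ?thesis
    by (rule invertible_opI[of "SB \<circ> SA"]) (auto simp: a b intro: bop_comp)
qed

lemma inv_scal:
  assumes "invertible_op (A::'a::complex_inner \<Rightarrow> 'a)" "c \<noteq> 0"
  shows "invertible_op (\<lambda>x. c *\<^sub>C A x)"
proof -
  obtain SA where a: "bounded_op SA" "\<And>x. SA (A x) = x" "\<And>x. A (SA x) = x"
    using invertible_opE[OF assms(1)] by blast
  have b: "bounded_op (SA \<circ> (\<lambda>x. (1/c) *\<^sub>C x))" by (rule bop_comp[OF a(1) bop_scal])
  show ?thesis
    by (rule invertible_opI[OF b]) (auto simp: a assms(2) scaleC_cancel scaleC_cancel2)
qed

lemma left_right_inv:
  assumes "bounded_op (L::'a::complex_inner \<Rightarrow> 'a)" "L \<circ> T = id" "right_invertible_op T"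
  shows "invertible_op T"
proof -
  obtain S where S: "bounded_op S" "T \<circ> S = id" using assms(3) unfolding right_invertible_op_def by blast
  have "L = S"
  proof -
    have "L = L \<circ> (T \<circ> S)" using S by simp
    also have "\<dots> = (L \<circ> T) \<circ> S" by (simp add: comp_assoc)
    finally show ?thesis using assms(2) by simp
  qed
  then show ?thesis unfolding invertible_op_def using S assms(1,2) by blast
qed

lemma large_not_spectrum:
  fixes A :: "'a::chilbert_space \<Rightarrow> 'a"
  assumes bA: "bounded_op A" and K: "K \<ge> 0" "\<And>x. norm (A x) \<le> K * norm x" and c: "cmod c > K"
  shows "invertible_op (shift_op A c)"
proof (rule invertible_from_lower[OF bop_shift[OF bA]])
  have c0: "c \<noteq> 0" using c K by auto
  show "surj (shift_op A c)"
  proof (rule surjI)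
    fix w
    define f where "f z = (1/c) *\<^sub>C (A z - w)" for z
    have "\<forall>x y. dist (f x) (f y) \<le> (K / cmod c) * dist x y"
    proof (intro allI)
      fix x y
      have "f x - f y = (1/c) *\<^sub>C (A (x - y))"
        by (simp add: f_def bop_diff[OF bA] scaleC_diff_right)
      then have "dist (f x) (f y) = (1 / cmod c) * norm (A (x - y))"
        by (simp add: dist_norm norm_scaleC norm_divide)
      also have "\<dots> \<le> (1 / cmod c) * (K * norm (x - y))"
        using K(2)[of "x - y"] by (simp add: divide_right_mono)
      finally show "dist (f x) (f y) \<le> (K / cmod c) * dist x y" by (simp add: dist_norm)
    qed
    moreover have "K / cmod c < 1" using c K by (subst pos_divide_less_eq) auto
    moreover have "0 \<le> K / cmod c" using c K by auto
    ultimately obtain z where z: "f z = z" using banach_fix_type[of "K / cmod c" f] by blast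
    then have "c *\<^sub>C z = A z - w" unfolding f_def using scaleC_cancel[OF c0] by metis
    then show "shift_op A c (SOME z. shift_op A c z = w) = w"
      by (metis (mono_tags, lifting) add_diff_cancel_left' diff_add_cancel shift_op_def someI_ex)
  qed
  show "0 < cmod c - K" using c by simp
  fix z
  have "cmod c * norm z - K * norm z \<le> norm (c *\<^sub>C z) - norm (A z)"
    using K(2)[of z] by (simp add: norm_scaleC)
  also have "\<dots> \<le> norm (A z - c *\<^sub>C z)"
    by (metis norm_minus_commute norm_triangle_ineq2)
  finally show "(cmod c - K) * norm z \<le> norm (shift_op A c z)"
    by (simp add: shift_op_def left_diff_distrib)
qed


lemma shift_lower:
  fixes A :: "'a::complex_inner \<Rightarrow> 'a"
  assumes K: "\<And>x. norm (A x) \<le> K * norm x"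
  shows "(cmod c - K) * norm z \<le> norm (shift_op A c z)"
proof -
  have "cmod c * norm z - K * norm z \<le> norm (c *\<^sub>C z) - norm (A z)"
    using K[of z] by (simp add: norm_scaleC)
  also have "\<dots> \<le> norm (A z - c *\<^sub>C z)"
    by (metis norm_minus_commute norm_triangle_ineq2)
  finally show ?thesis
    by (simp add: shift_op_def left_diff_distrib)
qed

lemma shift_op_change: "shift_op A l v = shift_op A m v - (l - m) *\<^sub>C v"
  unfolding shift_op_def by (simp add: scaleC_diff_left)

lemma spectrum_nonempty:
  fixes A :: "'a::chilbert_space \<Rightarrow> 'a"
  assumes nontriv: "\<exists>x::'a. x \<noteq> 0" and bA: "bounded_op A"
  shows "op_spectrum A \<noteq> {}"
proof
  assume E: "op_spectrum A = {}"
  have inv: "invertible_op (shift_op A l)" for l using E unfolding op_spectrum_def by blast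
  define R where "R l = (SOME S. bounded_op S \<and> (\<forall>x. S (shift_op A l x) = x) \<and> (\<forall>x. shift_op A l (S x) = x))" for l
  have R: "bounded_op (R l) \<and> (\<forall>x. R l (shift_op A l x) = x) \<and> (\<forall>x. shift_op A l (R l x) = x)" for l
  proof -
    obtain S where "bounded_op S" "\<And>x. S (shift_op A l x) = x" "\<And>x. shift_op A l (S x) = x"
      using invertible_opE[OF inv[of l]] by blast
    then have "\<exists>S. bounded_op S \<and> (\<forall>x. S (shift_op A l x) = x) \<and> (\<forall>x. shift_op A l (S x) = x)" by blast
    then show ?thesis unfolding R_def by (rule someI_ex)
  qed
  have Rb: "bounded_op (R l)" and R1: "R l (shift_op A l x) = x" and R2: "shift_op A l (R l x) = x" for l x
    using R by blast+
  have bS: "bounded_op (shift_op A l)" for l by (rule bop_shift[OF bA])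
  have resolvent: "R l w - R m w = (l - m) *\<^sub>C R l (R m w)" for l m w
  proof -
    have "shift_op A l (R l w - R m w) = w - shift_op A l (R m w)"
      by (simp add: bop_diff[OF bS] R2)
    also have "\<dots> = (l - m) *\<^sub>C R m w"
      by (simp add: shift_op_change[of A l _ m] R2)
    also have "\<dots> = shift_op A l ((l - m) *\<^sub>C R l (R m w))"
      by (simp add: bop_scaleC[OF bS] R2)
    finally have "shift_op A l (R l w - R m w) = shift_op A l ((l - m) *\<^sub>C R l (R m w))" .
    then show ?thesis by (metis R1)
  qed
  obtain K where K: "K > 0" "\<And>x. norm (A x) \<le> K * norm x" using bop_bound[OF bA] by blast
  have far: "norm (R l w) \<le> norm w / (cmod l - K)" if "cmod l > K" for l w
  proof -
    have "(cmod l - K) * norm (R l w) \<le> norm w"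
      using shift_lower[OF K(2), of l "R l w"] by (simp add: R2)
    then show ?thesis using that by (simp add: field_simps)
  qed
  have locb: "\<exists>M>0. \<forall>l w. cmod (l - m) \<le> 1 / (2 * M) \<longrightarrow> norm (R l w) \<le> 2 * M * norm w" for m
  proof -
    obtain M where M: "M > 0" "\<And>x. norm (R m x) \<le> M * norm x" using bop_bound[OF Rb[of m]] by blast
    have "norm (R l w) \<le> 2 * M * norm w" if lm: "cmod (l - m) \<le> 1 / (2 * M)" for l w
    proof -
      define z where "z = R l w"
      have "shift_op A m z = w + (l - m) *\<^sub>C z"
        using shift_op_change[of A l z m] by (simp add: z_def R2 algebra_simps)
      then have "z = R m (w + (l - m) *\<^sub>C z)" by (metis R1)
      then have "norm z \<le> M * norm (w + (l - m) *\<^sub>C z)" using M(2) by metis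
      also have "\<dots> \<le> M * (norm w + cmod (l - m) * norm z)"
        using M(1) by (intro mult_left_mono) (auto simp: norm_scaleC intro: order.trans[OF norm_triangle_ineq])
      also have "\<dots> \<le> M * (norm w + (1 / (2 * M)) * norm z)"
        using M(1) lm by (intro mult_left_mono add_left_mono mult_right_mono) auto
      also have "\<dots> = M * norm w + norm z / 2" using M(1) by (simp add: field_simps)
      finally show ?thesis unfolding z_def by simp
    qed
    then show ?thesis using M(1) by (intro exI[of _ M]) auto
  qed
  have cont: "((\<lambda>l. cinner y (R l v)) \<longlongrightarrow> cinner y (R m v)) (at m)" for y v m
  proof -
    obtain M where M: "M > 0" "\<And>l w. cmod (l - m) \<le> 1 / (2 * M) \<Longrightarrow> norm (R l w) \<le> 2 * M * norm w"
      using locb[of m] by blast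
    define C where "C = norm y * (2 * M * norm (R m v))"
    have ev: "eventually (\<lambda>l. norm (cinner y (R l v) - cinner y (R m v)) \<le> C * cmod (l - m)) (at m)"
      unfolding eventually_at
    proof (intro exI[of _ "1 / (2 * M)"] conjI ballI impI)
      show "0 < 1 / (2 * M)" using M(1) by simp
      fix l assume "l \<in> UNIV" "l \<noteq> m \<and> dist l m < 1 / (2 * M)"
      then have lm: "cmod (l - m) \<le> 1 / (2 * M)" by (simp add: dist_norm)
      have "norm (cinner y (R l v) - cinner y (R m v)) = cmod (cinner y (R l v - R m v))"
        by (simp add: cinner_diff_right)
      also have "\<dots> \<le> norm y * norm (R l v - R m v)" by (rule cauchy_schwarz)
      also have "norm (R l v - R m v) = cmod (l - m) * norm (R l (R m v))"
        by (simp add: resolvent norm_scaleC)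
      also have "norm y * (cmod (l - m) * norm (R l (R m v))) \<le> norm y * (cmod (l - m) * (2 * M * norm (R m v)))"
        by (intro mult_left_mono M(2)[OF lm]) auto
      finally show "norm (cinner y (R l v) - cinner y (R m v)) \<le> C * cmod (l - m)"
        by (simp add: C_def algebra_simps)
    qed
    have "((\<lambda>l. C * cmod (l - m)) \<longlongrightarrow> C * cmod (m - m)) (at m)"
      by (intro tendsto_intros)
    then have "((\<lambda>l. C * cmod (l - m)) \<longlongrightarrow> 0) (at m)" by simp
    then have "((\<lambda>l. cinner y (R l v) - cinner y (R m v)) \<longlongrightarrow> 0) (at m)"
      by (rule Lim_null_comparison[OF ev])
    then show ?thesis by (simp add: Lim_null[symmetric])
  qed
  have holo: "(\<lambda>l. cinner y (R l x)) holomorphic_on UNIV" for y x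
  proof -
    have "DERIV (\<lambda>l. cinner y (R l x)) m :> cinner y (R m (R m x))" for m
    proof -
      have "((\<lambda>l. cinner y (R l (R m x))) \<longlongrightarrow> cinner y (R m (R m x))) (at m)" by (rule cont)
      moreover have "eventually (\<lambda>l. cinner y (R l (R m x)) = (cinner y (R l x) - cinner y (R m x)) / (l - m)) (at m)"
        unfolding eventually_at
      proof (intro exI[of _ 1] conjI ballI impI)
        fix l assume "l \<in> UNIV" "l \<noteq> m \<and> dist l m < 1"
        then have "l - m \<noteq> 0" by simp
        then show "cinner y (R l (R m x)) = (cinner y (R l x) - cinner y (R m x)) / (l - m)"
          by (simp add: cinner_diff_right[symmetric] resolvent cinner_scaleC_right)
      qed simp
      ultimately have "((\<lambda>l. (cinner y (R l x) - cinner y (R m x)) / (l - m)) \<longlongrightarrow> cinner y (R m (R m x))) (at m)"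
        by (rule Lim_transform_eventually)
      then show ?thesis by (simp add: has_field_derivative_iff)
    qed
    then show ?thesis by (auto simp: holomorphic_on_open)
  qed
  have lim: "((\<lambda>l. cinner y (R l x)) \<longlongrightarrow> 0) at_infinity" for y x
  proof -
    define C where "C = 2 * norm y * norm x"
    have ev: "eventually (\<lambda>l. norm (cinner y (R l x)) \<le> C * norm (inverse l)) at_infinity"
      unfolding eventually_at_infinity
    proof (intro exI[of _ "2 * K"] allI impI)
      fix l :: complex assume l: "2 * K \<le> norm l"
      then have lK: "cmod l > K" "cmod l - K \<ge> cmod l / 2" "cmod l > 0" using K(1) by auto
      have "norm (cinner y (R l x)) \<le> norm y * norm (R l x)" by (simp add: cauchy_schwarz)
      also have "\<dots> \<le> norm y * (norm x / (cmod l - K))" by (intro mult_left_mono far lK) auto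
      also have "\<dots> \<le> norm y * (norm x / (cmod l / 2))"
        using lK K(1) by (intro mult_left_mono divide_left_mono) (auto intro!: mult_pos_pos)
      also have "\<dots> = C * norm (inverse l)" by (simp add: C_def norm_inverse norm_divide field_simps)
      finally show "norm (cinner y (R l x)) \<le> C * norm (inverse l)" .
    qed
    have "((\<lambda>l::complex. C * norm (inverse l)) \<longlongrightarrow> C * 0) at_infinity"
      by (intro tendsto_mult tendsto_const tendsto_norm_zero tendsto_inverse_0)
    then show ?thesis by (intro Lim_null_comparison[OF ev]) simp
  qed
  obtain x0 :: 'a where x0: "x0 \<noteq> 0" using nontriv by blast
  have "cinner (R 0 x0) (R 0 x0) = 0"
    using Liouville_weak_0[OF holo[of "R 0 x0" x0] lim[of "R 0 x0" x0], of 0] by simp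
  then have "R 0 x0 = 0" by (simp add: cinner_eq_zero_iff)
  then have "x0 = shift_op A 0 0" by (metis R2)
  then show False using x0 bop_zero[OF bS] by simp
qed


lemma spectrum_bounded:
  fixes A :: "'a::chilbert_space \<Rightarrow> 'a"
  assumes bA: "bounded_op A"
  shows "\<exists>K>0. \<forall>c\<in>op_spectrum A. cmod c \<le> K"
proof -
  obtain K where K: "K > 0" "\<And>x. norm (A x) \<le> K * norm x" using bop_bound[OF bA] by blast
  have "cmod c \<le> K" if "c \<in> op_spectrum A" for c
    using large_not_spectrum[OF bA _ K(2), of c] K(1) that unfolding op_spectrum_def by force
  then show ?thesis using K(1) by blast
qed

lemma spectrum_bdd:
  fixes A :: "'a::chilbert_space \<Rightarrow> 'a"
  assumes bA: "bounded_op A"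
  shows "bdd_above (norm ` op_spectrum A)"
  using spectrum_bounded[OF bA] unfolding bdd_above_def by fast

lemma spectral_radius_upper:
  fixes A :: "'a::chilbert_space \<Rightarrow> 'a"
  assumes bA: "bounded_op A" and c: "c \<in> op_spectrum A"
  shows "cmod c \<le> spectral_radius_op A"
  unfolding spectral_radius_op_def using c by (intro cSup_upper spectrum_bdd[OF bA]) auto

theorem corollary4p2:
  fixes T L :: "'a::chilbert_space \<Rightarrow> 'a"
  assumes nontriv: "\<exists>x::'a. x \<noteq> 0"
    and T_bdd: "bounded_op T" and L_bdd: "bounded_op L"
    and T_left_inv: "left_invertible_op T"
    and LT: "L \<circ> T = id"
  shows "spectral_radius_op L > 0
    \<and> (0 \<in> op_spectrum T \<longrightarrow>
         ball 0 (1 / spectral_radius_op L) \<subseteq> right_spectrum T - left_spectrum T)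
    \<and> (0 \<notin> op_spectrum T \<longrightarrow>
         op_spectrum T \<subseteq> UNIV - ball 0 (1 / spectral_radius_op L))
    \<and> spectral_radius_op T * spectral_radius_op L \<ge> 1"
proof -
  define rL where "rL = spectral_radius_op L"
  define rT where "rT = spectral_radius_op T"
  have LTx: "L (T x) = x" for x using LT by (metis comp_apply id_apply)
  have nonT: "op_spectrum T \<noteq> {}" by (rule spectrum_nonempty[OF nontriv T_bdd])
  define P where "P l = (\<lambda>x. (- l) *\<^sub>C shift_op L (1 / l) x)" for l
  have Pb: "bounded_op (P l)" for l
  proof -
    have "bounded_op ((\<lambda>x. (- l) *\<^sub>C x) \<circ> shift_op L (1 / l))"
      by (rule bop_comp[OF bop_scal bop_shift[OF L_bdd]])
    then show ?thesis unfolding P_def comp_def .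
  qed
  have Pfac: "shift_op T l = P l \<circ> T" if "l \<noteq> 0" for l
  proof
    fix x
    have "(P l \<circ> T) x = (- l) *\<^sub>C (x - (1 / l) *\<^sub>C T x)"
      by (simp add: P_def shift_op_def LTx)
    also have "\<dots> = T x - l *\<^sub>C x"
      using that by (simp add: scaleC_diff_right scaleC_scaleC scaleC_minus_left scaleC_one)
    finally show "shift_op T l x = (P l \<circ> T) x" by (simp add: shift_op_def)
  qed
  have Pinv: "invertible_op (P l)" if "l \<noteq> 0" "rL * cmod l < 1" for l
  proof -
    have "1 / l \<notin> op_spectrum L"
    proof
      assume "1 / l \<in> op_spectrum L"
      then have "cmod (1 / l) \<le> rL" unfolding rL_def by (rule spectral_radius_upper[OF L_bdd])
      then have "1 \<le> rL * cmod l" using that by (simp add: norm_divide field_simps)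
      then show False using that by simp
    qed
    then have "invertible_op (shift_op L (1 / l))" unfolding op_spectrum_def by blast
    then show ?thesis unfolding P_def using that by (intro inv_scal) auto
  qed
  define good where "good l \<longleftrightarrow> l = 0 \<or> rL * cmod l < 1" for l
  have caseA: "invertible_op (shift_op T l)" if "invertible_op T" "good l" for l
  proof (cases "l = 0")
    case True then show ?thesis using that by (simp add: shift_op_0)
  next
    case False
    then have "rL * cmod l < 1" using that good_def by blast
    then show ?thesis using Pfac[OF False] inv_comp[OF Pinv[OF False] that(1)] by simp
  qed
  have caseB: "left_invertible_op (shift_op T l) \<and> \<not> right_invertible_op (shift_op T l)"
    if nT: "\<not> invertible_op T" and g: "good l" for l
  proof (cases "l = 0")
    case True
    have "\<not> right_invertible_op T" using left_right_inv[OF L_bdd LT] nT by blast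
    then show ?thesis using True T_left_inv by (simp add: shift_op_0)
  next
    case False
    then have "rL * cmod l < 1" using g good_def by blast
    then obtain Q where Q: "bounded_op Q" "\<And>x. Q (P l x) = x" "\<And>x. P l (Q x) = x"
      using invertible_opE[OF Pinv[OF False]] by blast
    have sh: "shift_op T l x = P l (T x)" for x using Pfac[OF False] by simp
    have "left_invertible_op (shift_op T l)"
      unfolding left_invertible_op_def
      by (intro exI[of _ "L \<circ> Q"] conjI bop_comp[OF L_bdd Q(1)]) (auto simp: sh Q LTx)
    moreover have "\<not> right_invertible_op (shift_op T l)"
    proof
      assume "right_invertible_op (shift_op T l)"
      then obtain S where S: "bounded_op S" "shift_op T l \<circ> S = id" unfolding right_invertible_op_def by blast
      have S': "P l (T (S x)) = x" for x using S(2) sh by (metis comp_apply id_apply)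
      have "T (S (P l y)) = y" for y by (metis Q(2) S')
      then have "right_invertible_op T" unfolding right_invertible_op_def
        by (intro exI[of _ "S \<circ> P l"] conjI bop_comp[OF S(1) Pb]) auto
      then show False using left_right_inv[OF L_bdd LT] nT by blast
    qed
    ultimately show ?thesis by blast
  qed
  have inv_right: "right_invertible_op A" if "invertible_op A" for A :: "'a \<Rightarrow> 'a"
    using that unfolding invertible_op_def right_invertible_op_def by blast
  have rLpos: "rL > 0"
  proof (rule ccontr)
    assume "\<not> rL > 0"
    then have allgood: "good l" for l unfolding good_def
      by (metis leI mult_nonpos_nonneg norm_ge_zero order_le_less_trans zero_less_one)
    show False
    proof (cases "invertible_op T")
      case True
      then have "op_spectrum T = {}" using caseA allgood unfolding op_spectrum_def by blast
      then show False using nonT by blast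
    next
      case False
      obtain K where K: "K > 0" "\<And>x. norm (T x) \<le> K * norm x" using bop_bound[OF T_bdd] by blast
      have "invertible_op (shift_op T (complex_of_real (K + 1)))"
        using K by (intro large_not_spectrum[OF T_bdd _ K(2)]) auto
      then show False using caseB[OF False allgood] inv_right by blast
    qed
  qed
  have ballgood: "good l" if "l \<in> ball 0 (1 / rL)" for l
  proof -
    have "cmod l < 1 / rL" using that by simp
    then have "rL * cmod l < 1" using rLpos by (simp add: field_simps)
    then show ?thesis unfolding good_def by blast
  qed
  have c2: "ball 0 (1 / rL) \<subseteq> right_spectrum T - left_spectrum T" if "0 \<in> op_spectrum T"
  proof -
    have nT: "\<not> invertible_op T" using that unfolding op_spectrum_def by (simp add: shift_op_0)
    show ?thesis
      using caseB[OF nT ballgood] unfolding right_spectrum_def left_spectrum_def by blast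
  qed
  have c3: "op_spectrum T \<subseteq> UNIV - ball 0 (1 / rL)" if "0 \<notin> op_spectrum T"
  proof -
    have iT: "invertible_op T" using that unfolding op_spectrum_def by (simp add: shift_op_0)
    show ?thesis using caseA[OF iT ballgood] unfolding op_spectrum_def by blast
  qed
  have c4: "rT * rL \<ge> 1"
  proof (cases "0 \<in> op_spectrum T")
    case True
    have rT0: "rT \<ge> 0" using spectral_radius_upper[OF T_bdd True] unfolding rT_def by simp
    have "1 / rL \<le> rT"
    proof (rule ccontr)
      assume "\<not> 1 / rL \<le> rT"
      define t where "t = (rT + 1 / rL) / 2"
      have t: "0 \<le> t" "t < 1 / rL" "rT < t" using rT0 \<open>\<not> 1 / rL \<le> rT\<close> unfolding t_def by auto
      have "complex_of_real t \<in> ball 0 (1 / rL)" using t by simp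
      then have "complex_of_real t \<in> op_spectrum T" using c2[OF True] unfolding right_spectrum_def op_spectrum_def
        using inv_right by blast
      then have "cmod (complex_of_real t) \<le> rT" unfolding rT_def by (rule spectral_radius_upper[OF T_bdd])
      then show False using t by simp
    qed
    then show ?thesis using rLpos by (simp add: field_simps)
  next
    case False
    obtain c where c: "c \<in> op_spectrum T" using nonT by blast
    then have "c \<notin> ball 0 (1 / rL)" using c3[OF False] by blast
    then have "1 / rL \<le> cmod c" by simp
    also have "cmod c \<le> rT" unfolding rT_def by (rule spectral_radius_upper[OF T_bdd c])
    finally show ?thesis using rLpos by (simp add: field_simps)
  qed
  show ?thesis using rLpos c2 c3 c4 unfolding rL_def rT_def by blast
qed

end
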